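(* Let $A\in\mathrm{GL}_{n}(\mathbb{Z})$ be irreducible and have an eigenvalue of absolute value $1$. Then the stable word length on $G=\mathbb{Z}^{n}\rtimes_{A}\mathbb{Z}$ (with respect to a finite generating set) is purely positive, i.e. it is positive on every element of infinite order.
   Context: $\mathbb{Z}^{n}\rtimes_{A}\mathbb{Z}$ is the semidirect product in which a generator of $\mathbb{Z}$ acts on $\mathbb{Z}^n$ by $A$. $A$ is irreducible if $\mathbb{Z}^n$ has no nonzero proper $A$-invariant subgroup $I$ with $\mathbb{Z}^n/I$ torsion-free (equivalently, $\mathbb{Q}^n$ has no nonzero proper $A$-invariant subspace). For a finite symmetric generating set $S$ with word length $|\cdot|_S$, the stable word length is $\mathrm{swl}_S(g)=\lim_{k\to\infty}|g^{k}|_S/k$. *)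

theory Defs
  imports "HOL-Analysis.Analysis"
begin

type_synonym 'n sdp = "(int^'n) \<times> int"

definition in_GL_int :: "int^'n^'n \<Rightarrow> bool" where
  "in_GL_int A \<longleftrightarrow> (\<exists>B. A ** B = mat 1 \<and> B ** A = mat 1)"

definition gl_inv :: "int^'n^'n \<Rightarrow> int^'n^'n" where
  "gl_inv A = (SOME B. A ** B = mat 1 \<and> B ** A = mat 1)"

definition nat_mpow :: "int^'n^'n \<Rightarrow> nat \<Rightarrow> int^'n^'n" where
  "nat_mpow A k = (((**) A) ^^ k) (mat 1)"

definition int_mpow :: "int^'n^'n \<Rightarrow> int \<Rightarrow> int^'n^'n" where
  "int_mpow A k = (if 0 \<le> k then nat_mpow A (nat k) else nat_mpow (gl_inv A) (nat (-k)))"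

definition irreducible_int_mat :: "int^'n^'n \<Rightarrow> bool" where
  "irreducible_int_mat A \<longleftrightarrow>
     \<not> (\<exists>I :: (int^'n) set.
          0 \<in> I \<and> (\<forall>x\<in>I. \<forall>y\<in>I. x + y \<in> I) \<and> (\<forall>x\<in>I. - x \<in> I)
        \<and> I \<noteq> {0} \<and> I \<noteq> UNIV
        \<and> (\<forall>x\<in>I. A *v x \<in> I)
        \<and> (\<forall>v (m::int). m \<noteq> 0 \<and> m *s v \<in> I \<longrightarrow> v \<in> I))"

definition has_unit_eigenvalue :: "int^'n^'n \<Rightarrow> bool" where
  "has_unit_eigenvalue A \<longleftrightarrow>
     (\<exists>(c::complex) (v::complex^'n). cmod c = 1 \<and> v \<noteq> 0 \<and>
        (\<chi> i j. (of_int (A $ i $ j) :: complex)) *v v = c *s v)"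

definition sd_mult :: "int^'n^'n \<Rightarrow> ('n sdp) \<Rightarrow> ('n sdp) \<Rightarrow> ('n sdp)" where
  "sd_mult A g h = (fst g + int_mpow A (snd g) *v fst h, snd g + snd h)"

definition sd_one :: "('n::finite) sdp" where
  "sd_one = (0, 0)"

definition sd_inv :: "int^'n^'n \<Rightarrow> ('n sdp) \<Rightarrow> ('n sdp)" where
  "sd_inv A g = (- (int_mpow A (- snd g) *v fst g), - snd g)"

definition sd_pow :: "int^'n^'n \<Rightarrow> ('n sdp) \<Rightarrow> nat \<Rightarrow> ('n sdp)" where
  "sd_pow A g k = ((sd_mult A g) ^^ k) sd_one"

definition sd_prod :: "int^'n^'n \<Rightarrow> ('n sdp) list \<Rightarrow> ('n sdp)" where
  "sd_prod A ws = foldr (sd_mult A) ws sd_one"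

definition finite_sym_gen_set :: "int^'n^'n \<Rightarrow> ('n sdp) set \<Rightarrow> bool" where
  "finite_sym_gen_set A S \<longleftrightarrow> finite S \<and> (\<forall>s\<in>S. sd_inv A s \<in> S)
      \<and> (\<forall>g. \<exists>ws. set ws \<subseteq> S \<and> sd_prod A ws = g)"

definition word_length :: "int^'n^'n \<Rightarrow> ('n sdp) set \<Rightarrow> ('n sdp) \<Rightarrow> nat" where
  "word_length A S g = (LEAST m. \<exists>ws. set ws \<subseteq> S \<and> length ws = m \<and> sd_prod A ws = g)"

definition stable_word_length :: "int^'n^'n \<Rightarrow> ('n sdp) set \<Rightarrow> ('n sdp) \<Rightarrow> real" where
  "stable_word_length A S g = lim (\<lambda>k. real (word_length A S (sd_pow A g k)) / real k)"

definition infinite_order :: "int^'n^'n \<Rightarrow> ('n sdp) \<Rightarrow> bool" where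
  "infinite_order A g \<longleftrightarrow> (\<forall>k>0. sd_pow A g k \<noteq> sd_one)"

end

theory Submission
  imports Defs
begin

lemma gl_inv_props:
  assumes "in_GL_int A"
  shows "A ** gl_inv A = mat 1" "gl_inv A ** A = mat 1"
proof -
  have "A ** gl_inv A = mat 1 \<and> gl_inv A ** A = mat 1"
    using assms unfolding in_GL_int_def gl_inv_def by (rule someI_ex)
  thus "A ** gl_inv A = mat 1" "gl_inv A ** A = mat 1" by auto
qed

lemma nat_mpow_0[simp]: "nat_mpow A 0 = mat 1"
  by (simp add: nat_mpow_def)

lemma nat_mpow_Suc: "nat_mpow A (Suc k) = A ** nat_mpow A k"
  by (simp add: nat_mpow_def)

lemma int_mpow_0[simp]: "int_mpow A 0 = mat 1"
  by (simp add: int_mpow_def)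

lemma int_mpow_succ:
  assumes "in_GL_int A"
  shows "int_mpow A (k+1) = A ** int_mpow A k"
proof (cases "k \<ge> 0")
  case True
  then have "nat (k+1) = Suc (nat k)" by simp
  then show ?thesis using True by (simp add: int_mpow_def nat_mpow_Suc)
next
  case False
  define m where "m = nat (-k-1)"
  have k: "nat (-k) = Suc m" using False m_def by simp
  have "int_mpow A k = gl_inv A ** nat_mpow (gl_inv A) m"
    using False k by (simp add: int_mpow_def nat_mpow_Suc)
  moreover have "int_mpow A (k+1) = nat_mpow (gl_inv A) m"
  proof (cases "k = -1")
    case True then show ?thesis using m_def by simp
  next
    case False
    then have "\<not> 0 \<le> k+1" "nat (-(k+1)) = m" using \<open>\<not> k \<ge> 0\<close> m_def by auto
    then show ?thesis by (simp add: int_mpow_def)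
  qed
  ultimately show ?thesis
    by (simp add: matrix_mul_assoc gl_inv_props[OF assms])
qed

lemma int_mpow_pred:
  assumes "in_GL_int A"
  shows "int_mpow A (k-1) = gl_inv A ** int_mpow A k"
proof -
  have "int_mpow A k = A ** int_mpow A (k-1)" using int_mpow_succ[OF assms, of "k-1"] by simp
  then show ?thesis by (simp add: matrix_mul_assoc gl_inv_props[OF assms])
qed

lemma int_mpow_add:
  assumes "in_GL_int A"
  shows "int_mpow A (k+l) = int_mpow A k ** int_mpow A l"
proof (induction k rule: int_induct[where k=0])
  case base then show ?case by simp
next
  case (step1 i)
  have "int_mpow A (i+1+l) = A ** int_mpow A (i+l)"
    using int_mpow_succ[OF assms, of "i+l"] by (simp add: ac_simps)
  also have "\<dots> = int_mpow A (i+1) ** int_mpow A l"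
    using step1 by (simp add: int_mpow_succ[OF assms] matrix_mul_assoc)
  finally show ?case .
next
  case (step2 i)
  have "i-1+l = (i+l) - 1" by simp
  then have "int_mpow A (i-1+l) = gl_inv A ** int_mpow A (i+l)"
    using int_mpow_pred[OF assms, of "i+l"] by metis
  also have "\<dots> = int_mpow A (i-1) ** int_mpow A l"
    using step2 by (simp add: int_mpow_pred[OF assms] matrix_mul_assoc)
  finally show ?case .
qed

lemma sd_assoc:
  assumes "in_GL_int A"
  shows "sd_mult A (sd_mult A x y) z = sd_mult A x (sd_mult A y z)"
  by (simp add: sd_mult_def int_mpow_add[OF assms] matrix_vector_right_distrib
      matrix_vector_mul_assoc add.assoc)

lemma sd_one_mult[simp]: "sd_mult A sd_one x = x"
  by (simp add: sd_mult_def sd_one_def)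

lemma sd_prod_append:
  assumes "in_GL_int A"
  shows "sd_prod A (xs @ ys) = sd_mult A (sd_prod A xs) (sd_prod A ys)"
  by (induction xs) (simp_all add: sd_prod_def sd_assoc[OF assms])

lemma sd_pow_Suc: "sd_pow A g (Suc k) = sd_mult A g (sd_pow A g k)"
  by (simp add: sd_pow_def)

lemma sd_pow_add:
  assumes "in_GL_int A"
  shows "sd_pow A g (a+b) = sd_mult A (sd_pow A g a) (sd_pow A g b)"
  by (induction a) (simp_all add: sd_pow_def sd_assoc[OF assms])


definition phi :: "complex^'n \<Rightarrow> int^'n \<Rightarrow> complex" where
  "phi w u = (\<Sum>i\<in>UNIV. w$i * of_int (u$i))"

lemma phi_add: "phi w (x + y) = phi w x + phi w y"
  by (simp add: phi_def distrib_left sum.distrib)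

lemma phi_neg: "phi w (- x) = - phi w x"
  by (simp add: phi_def sum_negf)

lemma phi_smult: "phi w (m *s x) = of_int m * phi w x"
  by (simp add: phi_def sum_distrib_left ac_simps)

lemma phi_zero: "phi w 0 = 0"
  by (simp add: phi_def)

lemma left_eigvec:
  assumes "has_unit_eigenvalue (A :: int^'n^'n)"
  obtains c w where "cmod c = 1" "w \<noteq> 0" "\<And>u. phi w (A *v u) = c * phi w u"
proof -
  let ?M = "(\<chi> i j. (of_int (A $ i $ j) :: complex)) :: complex^'n^'n"
  obtain c v where c: "cmod c = 1" and v: "(v::complex^'n) \<noteq> 0" and ev: "?M *v v = c *s v"
    using assms unfolding has_unit_eigenvalue_def by blast
  define N where "N = ?M - mat c"
  have mc: "mat c *v x = c *s x" for x :: "complex^'n"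
  proof -
    have "(\<Sum>j\<in>UNIV. (if i = j then c else 0) * x$j) = (\<Sum>j\<in>UNIV. if i = j then c * x$j else 0)" for i
      by (rule sum.cong) auto
    then have "(\<Sum>j\<in>UNIV. (if i = j then c else 0) * x$j) = c * x$i" for i by simp
    then show ?thesis unfolding vec_eq_iff matrix_vector_mult_def mat_def by simp
  qed
  have "N *v v = 0" unfolding N_def using ev mc by (simp add: matrix_vector_mult_diff_rdistrib)
  then have nl: "\<not> (\<exists>B. B ** N = mat 1)" using v matrix_left_invertible_ker by blast
  have "\<not> (\<exists>B. B ** transpose N = mat 1)"
  proof
    assume "\<exists>B. B ** transpose N = mat 1"
    then obtain B where "B ** transpose N = mat 1" by blast
    then have "transpose (B ** transpose N) = mat 1" by simp
    then have "N ** transpose B = mat 1" by (simp add: matrix_transpose_mul)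
    then have "transpose B ** N = mat 1" using matrix_left_right_inverse by blast
    then show False using nl by blast
  qed
  then obtain w where w: "w \<noteq> 0" "transpose N *v w = 0"
    using matrix_left_invertible_ker by blast
  have wj: "(\<Sum>i\<in>UNIV. w$i * of_int (A$i$j)) = c * w$j" for j
  proof -
    have "(transpose N *v w) $ j = 0" using w by simp
    then have "(\<Sum>i\<in>UNIV. (of_int (A$i$j) - (if i = j then c else 0)) * w$i) = 0"
      by (simp add: N_def matrix_vector_mult_def transpose_def mat_def)
    then have "(\<Sum>i\<in>UNIV. of_int (A$i$j) * w$i) - (\<Sum>i\<in>UNIV. (if i = j then c else 0) * w$i) = 0"
      by (simp add: left_diff_distrib sum_subtractf)
    moreover have "(\<Sum>i\<in>UNIV. (if i = j then c else 0) * w$i) = c * w$j"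
    proof -
      have "(\<Sum>i\<in>UNIV. (if i = j then c else 0) * w$i) = (\<Sum>i\<in>UNIV. if i = j then c * w$i else 0)"
        by (rule sum.cong) auto
      then show ?thesis by simp
    qed
    ultimately have "(\<Sum>i\<in>UNIV. of_int (A$i$j) * w$i) = c * w$j" by simp
    then show ?thesis by (simp only: mult.commute)
  qed
  have "phi w (A *v u) = c * phi w u" for u
  proof -
    have "phi w (A *v u) = (\<Sum>i\<in>UNIV. \<Sum>j\<in>UNIV. w$i * of_int (A$i$j) * of_int (u$j))"
      by (simp add: phi_def matrix_vector_mult_def sum_distrib_left ac_simps)
    also have "\<dots> = (\<Sum>j\<in>UNIV. \<Sum>i\<in>UNIV. w$i * of_int (A$i$j) * of_int (u$j))"
      by (rule sum.swap)
    also have "\<dots> = (\<Sum>j\<in>UNIV. (\<Sum>i\<in>UNIV. w$i * of_int (A$i$j)) * of_int (u$j))"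
      by (simp add: sum_distrib_right)
    also have "\<dots> = c * phi w u"
      by (simp add: wj phi_def sum_distrib_left ac_simps)
    finally show ?thesis .
  qed
  then show ?thesis using that c w by blast
qed

lemma phi_ker_trivial:
  assumes irr: "irreducible_int_mat (A :: int^'n^'n)" and w: "w \<noteq> 0"
    and inv: "\<And>u. phi w (A *v u) = c * phi w u"
    and z: "phi w u = 0"
  shows "u = 0"
proof (rule ccontr)
  assume u: "u \<noteq> 0"
  let ?I = "{x. phi w x = 0}"
  have "?I \<noteq> UNIV"
  proof
    assume "?I = UNIV"
    then have "phi w (axis j 1) = 0" for j by auto
    moreover have "phi w (axis j 1) = w$j" for j
    proof -
      have "phi w (axis j 1) = (\<Sum>i\<in>UNIV. if j = i then w$i else 0)"
        unfolding phi_def by (rule sum.cong) (auto simp: axis_def)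
      then show ?thesis by simp
    qed
    ultimately have "w$j = 0" for j by metis
    then show False using w by (simp add: vec_eq_iff)
  qed
  moreover have "?I \<noteq> {0}" using u z by auto
  moreover have "\<forall>v (m::int). m \<noteq> 0 \<and> m *s v \<in> ?I \<longrightarrow> v \<in> ?I"
  proof (intro allI impI)
    fix v and m :: int assume "m \<noteq> 0 \<and> m *s v \<in> ?I"
    then have m0: "m \<noteq> 0" and "phi w (m *s v) = 0" by auto
    then have "of_int m * phi w v = 0" by (simp only: phi_smult)
    then show "v \<in> ?I" using m0 by simp
  qed
  moreover have "0 \<in> ?I" "\<forall>x\<in>?I. \<forall>y\<in>?I. x + y \<in> ?I" "\<forall>x\<in>?I. - x \<in> ?I"
    "\<forall>x\<in>?I. A *v x \<in> ?I"
    by (simp_all add: phi_add phi_neg phi_zero inv)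
  ultimately have "\<exists>I :: (int^'n) set.
          0 \<in> I \<and> (\<forall>x\<in>I. \<forall>y\<in>I. x + y \<in> I) \<and> (\<forall>x\<in>I. - x \<in> I)
        \<and> I \<noteq> {0} \<and> I \<noteq> UNIV
        \<and> (\<forall>x\<in>I. A *v x \<in> I)
        \<and> (\<forall>v (m::int). m \<noteq> 0 \<and> m *s v \<in> I \<longrightarrow> v \<in> I)"
    by (intro exI[of _ ?I] conjI) assumption+
  then show False using irr unfolding irreducible_int_mat_def by (rule notE[rotated])
qed


lemma subadd_mult:
  fixes a :: "nat \<Rightarrow> real"
  assumes sub: "\<And>m n. a (m+n) \<le> a m + a n"
  shows "a (q*m + r) \<le> real q * a m + a r"
proof (induction q)
  case 0 then show ?case by simp
next
  case (Suc q)
  have "a (Suc q * m + r) = a (m + (q*m + r))" by (simp add: add.assoc)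
  also have "\<dots> \<le> a m + a (q*m+r)" by (rule sub)
  also have "\<dots> \<le> a m + (real q * a m + a r)" using Suc by simp
  finally show ?case by (simp add: algebra_simps)
qed

lemma fekete:
  fixes a :: "nat \<Rightarrow> real"
  assumes sub: "\<And>m n. a (m+n) \<le> a m + a n" and nn: "\<And>n. a n \<ge> 0"
  shows "convergent (\<lambda>n. a n / real n)"
proof -
  define L where "L = Inf ((\<lambda>n. a n / real n) ` {1..})"
  have bdd: "bdd_below ((\<lambda>n. a n / real n) ` {1..})"
    by (rule bdd_belowI[of _ 0]) (auto simp: nn)
  have low: "L \<le> a n / real n" if "n \<ge> 1" for n
    unfolding L_def by (rule cInf_lower) (use that bdd in auto)
  have "(\<lambda>n. a n / real n) \<longlonglongrightarrow> L"
  proof (rule LIMSEQ_I)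
    fix e :: real assume e: "e > 0"
    have "\<exists>x\<in>(\<lambda>n. a n / real n) ` {1..}. x < L + e/2"
      unfolding L_def by (rule cInf_lessD) (use e in auto)
    then obtain m where m1: "m \<ge> 1" and am: "a m / real m < L + e/2" by auto
    define M where "M = (\<Sum>r<m. a r)"
    have aM: "a r \<le> M" if "r < m" for r
      unfolding M_def using that nn by (intro member_le_sum) auto
    have M0: "M \<ge> 0" unfolding M_def using nn by (simp add: sum_nonneg)
    obtain N :: nat where N: "N > 2*M/e" using reals_Archimedean2 by blast
    show "\<exists>no. \<forall>n\<ge>no. norm (a n / real n - L) < e"
    proof (intro exI[of _ "max 1 N"] allI impI)
      fix n assume n: "max 1 N \<le> n"
      then have n1: "n \<ge> 1" and nN: "n \<ge> N" by auto
      define q where "q = n div m"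
      define r where "r = n mod m"
      have nqr: "n = q*m + r" unfolding q_def r_def by simp
      have rm: "r < m" unfolding r_def using m1 by simp
      have "a n \<le> real q * a m + a r" using subadd_mult[OF sub, of q m r] nqr by simp
      also have "\<dots> \<le> real q * a m + M" using aM[OF rm] by simp
      finally have an: "a n \<le> real q * a m + M" .
      have qm: "real q * real m \<le> real n" using nqr
        by (metis of_nat_add of_nat_mult le_add1 of_nat_le_iff)
      have npos: "real n > 0" using n1 by simp
      have "real q * a m = (real q * real m) * (a m / real m)" using m1 by simp
      also have "\<dots> \<le> real n * (a m / real m)"
        using qm nn[of m] m1 by (intro mult_right_mono) auto
      finally have "a n \<le> real n * (a m / real m) + M" using an by simp
      then have "a n / real n \<le> a m / real m + M / real n"
        using npos by (simp add: field_simps)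
      moreover have "M / real n < e/2"
      proof -
        have "real n > 2*M/e" using N nN by (meson less_le_trans of_nat_le_iff)
        then have "2*M < real n * e" using e by (simp add: field_simps)
        then show ?thesis using npos by (simp add: divide_less_eq mult.commute)
      qed
      ultimately have "a n / real n < L + e" using am by linarith
      moreover have "L \<le> a n / real n" using low n1 by simp
      ultimately show "norm (a n / real n - L) < e" using e by simp
    qed
  qed
  then show ?thesis unfolding convergent_def by blast
qed


lemma nat_mpow_inv:
  assumes "\<And>u. f (X *v u) = f u"
  shows "f (nat_mpow X n *v u) = f u"
proof (induction n)
  case 0 then show ?case by simp
next
  case (Suc n)
  have "nat_mpow X (Suc n) *v u = X *v (nat_mpow X n *v u)"
    by (simp add: nat_mpow_Suc matrix_vector_mul_assoc)
  then show ?case using Suc assms by simp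
qed

lemma int_mpow_inv:
  assumes gl: "in_GL_int A" and fA: "\<And>u. f (A *v u) = f u"
  shows "f (int_mpow A k *v u) = f u"
proof -
  have fB: "f (gl_inv A *v u) = f u" for u
  proof -
    have "A *v (gl_inv A *v u) = u" by (simp add: matrix_vector_mul_assoc gl_inv_props[OF gl])
    then show ?thesis using fA[of "gl_inv A *v u"] by simp
  qed
  show ?thesis unfolding int_mpow_def using nat_mpow_inv[where f=f, OF fA] nat_mpow_inv[where f=f, OF fB] by simp
qed

lemma word_bounds:
  fixes f :: "int^'n \<Rightarrow> real"
  assumes gl: "in_GL_int A" and fA: "\<And>u. f (A *v u) = f u"
    and fadd: "\<And>x y. f (x + y) \<le> f x + f y" and fnn: "\<And>x. f x \<ge> 0" and f0: "f 0 = 0"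
    and fin: "finite S"
  shows "set ws \<subseteq> S \<Longrightarrow> f (fst (sd_prod A ws)) \<le> (\<Sum>s\<in>S. f (fst s)) * real (length ws)
      \<and> \<bar>real_of_int (snd (sd_prod A ws))\<bar> \<le> (\<Sum>s\<in>S. \<bar>real_of_int (snd s)\<bar>) * real (length ws)"
proof (induction ws)
  case Nil
  then show ?case by (simp add: sd_prod_def sd_one_def f0)
next
  case (Cons s ws)
  let ?C = "\<Sum>s\<in>S. f (fst s)" and ?D = "\<Sum>s\<in>S. \<bar>real_of_int (snd s)\<bar>"
  have sS: "s \<in> S" and wS: "set ws \<subseteq> S" using Cons.prems by auto
  have IH: "f (fst (sd_prod A ws)) \<le> ?C * real (length ws)"
     "\<bar>real_of_int (snd (sd_prod A ws))\<bar> \<le> ?D * real (length ws)" using Cons.IH wS by auto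
  have p: "sd_prod A (s # ws) = sd_mult A s (sd_prod A ws)" by (simp add: sd_prod_def)
  have Cs: "f (fst s) \<le> ?C" using fin sS fnn by (intro member_le_sum) auto
  have Ds: "\<bar>real_of_int (snd s)\<bar> \<le> ?D" using fin sS by (intro member_le_sum) auto
  have "f (fst (sd_prod A (s # ws))) = f (fst s + int_mpow A (snd s) *v fst (sd_prod A ws))"
    by (simp add: p sd_mult_def)
  also have "\<dots> \<le> f (fst s) + f (int_mpow A (snd s) *v fst (sd_prod A ws))" by (rule fadd)
  also have "\<dots> = f (fst s) + f (fst (sd_prod A ws))" using int_mpow_inv[where f=f, OF gl fA] by simp
  also have "\<dots> \<le> ?C + ?C * real (length ws)" using Cs IH by simp
  finally have 1: "f (fst (sd_prod A (s # ws))) \<le> ?C * real (length (s # ws))"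
    by (simp add: algebra_simps)
  have "\<bar>real_of_int (snd (sd_prod A (s # ws)))\<bar> = \<bar>real_of_int (snd s) + real_of_int (snd (sd_prod A ws))\<bar>"
    by (simp add: p sd_mult_def)
  also have "\<dots> \<le> \<bar>real_of_int (snd s)\<bar> + \<bar>real_of_int (snd (sd_prod A ws))\<bar>" by (rule abs_triangle_ineq)
  also have "\<dots> \<le> ?D + ?D * real (length ws)" using Ds IH by simp
  finally have 2: "\<bar>real_of_int (snd (sd_prod A (s # ws)))\<bar> \<le> ?D * real (length (s # ws))"
    by (simp add: algebra_simps)
  show ?case using 1 2 by blast
qed

lemma wl_ex:
  assumes "finite_sym_gen_set A S"
  shows "\<exists>ws. set ws \<subseteq> S \<and> length ws = word_length A S x \<and> sd_prod A ws = x"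
proof -
  obtain ws where "set ws \<subseteq> S" "sd_prod A ws = x" using assms unfolding finite_sym_gen_set_def by blast
  then have "\<exists>m ws. set ws \<subseteq> S \<and> length ws = m \<and> sd_prod A ws = x" by blast
  then show ?thesis unfolding word_length_def by (rule LeastI_ex)
qed

lemma wl_le:
  assumes "set ws \<subseteq> S" "sd_prod A ws = x"
  shows "word_length A S x \<le> length ws"
  unfolding word_length_def by (rule Least_le) (use assms in blast)

lemma snd_sd_pow: "snd (sd_pow A g k) = int k * snd g"
  by (induction k) (simp_all add: sd_pow_def sd_one_def sd_mult_def algebra_simps)

lemma fst_sd_pow0: "snd g = 0 \<Longrightarrow> fst (sd_pow A g k) = int k *s fst g"
  by (induction k) (simp_all add: sd_pow_def sd_one_def sd_mult_def algebra_simps vec_eq_iff)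

theorem lemma12:
  fixes A :: "int^'n^'n" and S :: "('n sdp) set"
  assumes "in_GL_int A"
    and "irreducible_int_mat A"
    and "has_unit_eigenvalue A"
    and "finite_sym_gen_set A S"
  shows "\<forall>g. infinite_order A g \<longrightarrow> stable_word_length A S g > 0"
proof (intro allI impI)
  fix g assume io: "infinite_order A g"
  note gl = assms(1) and gen = assms(4)
  have fin: "finite S" using gen unfolding finite_sym_gen_set_def by blast
  obtain c w where c: "cmod c = 1" and w: "w \<noteq> 0" and ev: "\<And>u. phi w (A *v u) = c * phi w u"
    using left_eigvec[OF assms(3)] by blast
  define f where "f u = cmod (phi w u)" for u
  have fA: "f (A *v u) = f u" for u by (simp add: f_def ev norm_mult c)
  have fadd: "f (x + y) \<le> f x + f y" for x y by (simp add: f_def phi_add norm_triangle_ineq)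
  have fnn: "f x \<ge> 0" for x by (simp add: f_def)
  have f0: "f 0 = 0" by (simp add: f_def phi_zero)
  have fpos: "f u > 0" if "u \<noteq> 0" for u
    using phi_ker_trivial[OF assms(2) w ev] that by (auto simp: f_def)
  have fsm: "f (int k *s u) = real k * f u" for k u by (simp add: f_def phi_smult norm_mult)
  let ?C = "\<Sum>s\<in>S. f (fst s)" and ?D = "\<Sum>s\<in>S. \<bar>real_of_int (snd s)\<bar>"
  define W where "W k = word_length A S (sd_pow A g k)" for k
  have Wex: "\<exists>ws. set ws \<subseteq> S \<and> length ws = W k \<and> sd_prod A ws = sd_pow A g k" for k
    unfolding W_def by (rule wl_ex[OF gen])
  have bnd: "f (fst (sd_pow A g k)) \<le> ?C * real (W k) \<and>
      \<bar>real_of_int (snd (sd_pow A g k))\<bar> \<le> ?D * real (W k)" for k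
    using Wex[of k] word_bounds[OF gl fA fadd fnn f0 fin] by metis
  have subW: "real (W (a+b)) \<le> real (W a) + real (W b)" for a b
  proof -
    obtain ws1 where 1: "set ws1 \<subseteq> S" "length ws1 = W a" "sd_prod A ws1 = sd_pow A g a" using Wex by blast
    obtain ws2 where 2: "set ws2 \<subseteq> S" "length ws2 = W b" "sd_prod A ws2 = sd_pow A g b" using Wex by blast
    have "sd_prod A (ws1 @ ws2) = sd_pow A g (a+b)"
      using 1 2 by (simp add: sd_prod_append[OF gl] sd_pow_add[OF gl])
    then have "W (a+b) \<le> length (ws1 @ ws2)" unfolding W_def using 1 2 by (intro wl_le) auto
    then show ?thesis using 1 2 by simp
  qed
  have conv: "convergent (\<lambda>k. real (W k) / real k)"
    by (rule fekete) (use subW in auto)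
  have "\<exists>e>0. \<forall>k\<ge>1. e \<le> real (W k) / real k"
  proof (cases "snd g = 0")
    case True
    have "fst g \<noteq> 0"
    proof
      assume "fst g = 0"
      then have "g = sd_one" using True by (simp add: sd_one_def prod_eq_iff)
      then have "sd_pow A g 1 = sd_one" by (simp add: sd_pow_def)
      then show False using io unfolding infinite_order_def by auto
    qed
    then have fg: "f (fst g) > 0" by (rule fpos)
    have kb: "real k * f (fst g) \<le> ?C * real (W k)" for k
      using bnd[of k] fst_sd_pow0[OF True, of A k] fsm by simp
    have "?C > 0"
    proof (rule ccontr)
      assume "\<not> ?C > 0"
      then have "?C * real (W 1) \<le> 0" by (simp add: mult_nonpos_nonneg)
      then show False using kb[of 1] fg by simp
    qed
    show ?thesis
    proof (intro exI[of _ "f (fst g) / ?C"] conjI allI impI)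
      show "f (fst g) / ?C > 0" using fg \<open>?C > 0\<close> by simp
      fix k :: nat assume "k \<ge> 1"
      then show "f (fst g) / ?C \<le> real (W k) / real k"
        using kb[of k] \<open>?C > 0\<close> by (simp add: field_simps)
    qed
  next
    case False
    have kb: "real k \<le> ?D * real (W k)" for k
    proof -
      have "real k \<le> real k * \<bar>real_of_int (snd g)\<bar>" using False
        by (simp add: mult_le_cancel_left1 ) (metis abs_ge_zero of_int_0_less_iff zero_less_abs_iff of_int_abs int_one_le_iff_zero_less abs_of_nonneg of_int_1_le_iff)
      also have "\<dots> = \<bar>real_of_int (snd (sd_pow A g k))\<bar>" by (simp add: snd_sd_pow abs_mult)
      finally show ?thesis using bnd[of k] by simp
    qed
    have "?D > 0"
    proof (rule ccontr)
      assume "\<not> ?D > 0"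
      then have "?D * real (W 1) \<le> 0" by (simp add: mult_nonpos_nonneg)
      then show False using kb[of 1] by simp
    qed
    show ?thesis
    proof (intro exI[of _ "1 / ?D"] conjI allI impI)
      show "1 / ?D > 0" using \<open>?D > 0\<close> by simp
      fix k :: nat assume "k \<ge> 1"
      then show "1 / ?D \<le> real (W k) / real k"
        using kb[of k] \<open>?D > 0\<close> by (simp add: field_simps)
    qed
  qed
  then obtain e where e: "e > 0" "\<And>k. k \<ge> 1 \<Longrightarrow> e \<le> real (W k) / real k" by blast
  from conv obtain l where l: "(\<lambda>k. real (W k) / real k) \<longlonglongrightarrow> l" unfolding convergent_def by blast
  have "e \<le> l" by (rule LIMSEQ_le_const[OF l]) (use e in auto)
  moreover have "stable_word_length A S g = l"
    unfolding stable_word_length_def using l W_def by (simp add: limI)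
  ultimately show "stable_word_length A S g > 0" using e by simp
qed


end
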